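(* Let $n\geq 1$ and let $x=(x_1,\dots,x_n)\in B^n$ be such that every iterate $S^jx$, $j\geq0$, has strictly positive last coordinate and the expansion is eventually periodic: $S^{m+p}x=S^mx$ for some $m\geq0$, $p\geq1$. Let $k_j:=\lfloor 1/(S^{j-1}x)_n\rfloor$ and let the periodicity matrix be $\beta^{(p)}:=\beta(k_{m+1})\cdots\beta(k_{m+p})$. Let $\rho_0$ be the largest eigenvalue of $\beta^{(p)}$ (its spectral radius, a real positive eigenvalue since $\beta^{(p)}$ has nonnegative entries). Then $x_1,\dots,x_n$ are rational functions with rational coefficients of $\rho_0$; consequently $x_1,\dots,x_n$ lie in the number field $\mathbb{Q}(\rho_0)$, whose degree is at most $n+1$.
   Context: $B^n:=\{(x_1,\dots,x_n)\in\mathbb{R}^n:1\geq x_1\geq\dots\geq x_n\geq0\}$. The multiplicative Selmer algorithm is the map, defined for $x\in B^n$ with $x_n>0$, $S(x_1,\dots,x_n)=\left(\frac{x_2}{x_1},\dots,\frac{x_n}{x_1},\frac{1-kx_n}{x_1}\right)$ with $k=\lfloor x_n^{-1}\rfloor$. For $k\in\mathbb{N}$, $\beta(k)$ is the $(n+1)\times(n+1)$ integer matrix (indices $0,\dots,n$) with entries $\beta(k)_{0,n-1}=k$, $\beta(k)_{0,n}=1$, $\beta(k)_{i,i-1}=1$ for $1\leq i\leq n$, and all other entries $0$. *)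

theory Defs
  imports Complex_Main "HOL-Computational_Algebra.Polynomial" "Jordan_Normal_Form.Spectral_Radius"
begin

text \<open>Points of B^n are represented as functions x :: nat => real, using the
coordinates x 1, ..., x n (1-based, as in the paper); other indices are irrelevant.\<close>

definition in_B :: "nat \<Rightarrow> (nat \<Rightarrow> real) \<Rightarrow> bool" where
  "in_B n x \<longleftrightarrow> (n \<ge> 1 \<longrightarrow> x 1 \<le> 1) \<and> (\<forall>i. 1 \<le> i \<and> i < n \<longrightarrow> x (i+1) \<le> x i)
      \<and> (n \<ge> 1 \<longrightarrow> 0 \<le> x n)"

definition selmer_digit :: "nat \<Rightarrow> (nat \<Rightarrow> real) \<Rightarrow> int" where
  "selmer_digit n x = \<lfloor>1 / x n\<rfloor>"

definition selmer :: "nat \<Rightarrow> (nat \<Rightarrow> real) \<Rightarrow> (nat \<Rightarrow> real)" where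
  "selmer n x = (\<lambda>i. if 1 \<le> i \<and> i < n then x (i+1) / x 1
      else if i = n then (1 - of_int (selmer_digit n x) * x n) / x 1 else 0)"

definition beta_mat :: "nat \<Rightarrow> int \<Rightarrow> int mat" where
  "beta_mat n k = mat (n+1) (n+1) (\<lambda>(i,j).
      if i = 0 \<and> j = n - 1 then k
      else if i = 0 \<and> j = n then 1
      else if 1 \<le> i \<and> j + 1 = i then 1 else 0)"

definition period_mat :: "nat \<Rightarrow> (nat \<Rightarrow> real) \<Rightarrow> nat \<Rightarrow> nat \<Rightarrow> int mat" where
  "period_mat n x m p = foldr (\<lambda>j M. beta_mat n (selmer_digit n ((selmer n ^^ (j - 1)) x)) * M)
      [m+1..<m+p+1] (1\<^sub>m (n+1))"

end

theory Submission
  imports Defs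
begin


definition bmul :: "nat \<Rightarrow> 'a::comm_ring_1 \<Rightarrow> (nat \<Rightarrow> 'a) \<Rightarrow> nat \<Rightarrow> 'a" where
 "bmul n k z = (\<lambda>i. if i = 0 then k * z (n-1) + z n else if i \<le> n then z (i-1) else 0)"

lemma beta_carrier[simp]: "beta_mat n k \<in> carrier_mat (n+1) (n+1)"
  by (simp add: beta_mat_def)

lemma bmul_vec:
  assumes n: "n \<ge> 1"
  shows "map_mat (of_int :: int \<Rightarrow> 'a::comm_ring_1) (beta_mat n k) *\<^sub>v vec (n+1) z = vec (n+1) (bmul n (of_int k) z)"
proof (rule eq_vecI)
  fix i assume i: "i < dim_vec (vec (n+1) (bmul n (of_int k) z))"
  hence i: "i < n+1" by simp
  have "(map_mat (of_int :: int \<Rightarrow> 'a) (beta_mat n k) *\<^sub>v vec (n+1) z) $ i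
     = (\<Sum>j<n+1. of_int (beta_mat n k $$ (i,j)) * z j)"
    using i by (simp add: scalar_prod_def beta_mat_def lessThan_atLeast0)
  also have "\<dots> = bmul n (of_int k) z i"
  proof (cases "i = 0")
    case True
    have "(\<Sum>j<n+1. of_int (beta_mat n k $$ (i,j)) * z j) = (\<Sum>j<n+1. (if j = n-1 then of_int k * z j else 0) + (if j = n then z j else 0))"
      using True n by (intro sum.cong refl) (auto simp: beta_mat_def)
    also have "\<dots> = of_int k * z (n-1) + z n" using n by (simp add: sum.distrib)
    finally show ?thesis using True by (simp add: bmul_def)
  next
    case False
    have "(\<Sum>j<n+1. of_int (beta_mat n k $$ (i,j)) * z j) = (\<Sum>j<n+1. (if j = i - 1 then z j else 0))"
      using False i n by (intro sum.cong refl) (auto simp: beta_mat_def)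
    also have "\<dots> = z (i-1)" using i False by auto
    finally show ?thesis using False i by (simp add: bmul_def)
  qed
  finally show "(map_mat (of_int :: int \<Rightarrow> 'a) (beta_mat n k) *\<^sub>v vec (n+1) z) $ i = vec (n+1) (bmul n (of_int k) z) $ i"
    using i by simp
qed (simp add: beta_mat_def)

lemma foldr_carrier: "foldr (\<lambda>j M. beta_mat n (D j) * M) js (1\<^sub>m (n+1)) \<in> carrier_mat (n+1) (n+1)"
proof (induction js)
  case (Cons a js)
  show ?case using mult_carrier_mat[OF beta_carrier Cons.IH] by simp
qed simp

lemma prod_vec:
  assumes n: "n \<ge> 1"
  shows "map_mat (of_int :: int \<Rightarrow> 'a::comm_ring_1) (foldr (\<lambda>j M. beta_mat n (D j) * M) js (1\<^sub>m (n+1))) *\<^sub>v vec (n+1) z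
     = vec (n+1) (foldr (\<lambda>j. bmul n (of_int (D j))) js z)"
proof (induction js)
  case Nil
  have "map_mat (of_int::int\<Rightarrow>'a) (1\<^sub>m (n+1)) = 1\<^sub>m (n+1)" by (rule eq_matI) auto
  then show ?case by simp
next
  case (Cons j js)
  have "map_mat (of_int :: int \<Rightarrow> 'a) (beta_mat n (D j) * foldr (\<lambda>j M. beta_mat n (D j) * M) js (1\<^sub>m (n+1)))
     = map_mat of_int (beta_mat n (D j)) * map_mat of_int (foldr (\<lambda>j M. beta_mat n (D j) * M) js (1\<^sub>m (n+1)))"
    by (rule of_int_hom.mat_hom_mult[OF beta_carrier foldr_carrier])
  moreover have "(map_mat (of_int :: int \<Rightarrow> 'a) (beta_mat n (D j)) * map_mat of_int (foldr (\<lambda>j M. beta_mat n (D j) * M) js (1\<^sub>m (n+1)))) *\<^sub>v vec (n+1) z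
     = map_mat (of_int :: int \<Rightarrow> 'a) (beta_mat n (D j)) *\<^sub>v (map_mat of_int (foldr (\<lambda>j M. beta_mat n (D j) * M) js (1\<^sub>m (n+1))) *\<^sub>v vec (n+1) z)"
    by (rule assoc_mult_mat_vec[of _ "n+1" "n+1" _ "n+1"]) (use foldr_carrier[of n D js] beta_carrier[of n "D j"] in auto)
  ultimately show ?case
    using Cons.IH bmul_vec[OF n]
    by (simp del: of_int_hom.mat_hom_mult)
qed

definition vecy :: "nat \<Rightarrow> (nat \<Rightarrow> real) \<Rightarrow> nat \<Rightarrow> real" where
  "vecy n y i = (if i = 0 then 1 else if i \<le> n then y i else 0)"

lemma inB_mono_aux: assumes "in_B n y" "1 \<le> i" shows "i + d \<le> n \<Longrightarrow> y (i+d) \<le> y i"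
proof (induction d)
  case (Suc d)
  have "y (i+d+1) \<le> y (i+d)" using assms Suc.prems unfolding in_B_def by auto
  then show ?case using Suc by simp
qed simp

lemma inB_mono: assumes "in_B n y" "1 \<le> i" "i \<le> j" "j \<le> n" shows "y j \<le> y i"
  using inB_mono_aux[OF assms(1,2), of "j - i"] assms(3,4) by simp

lemma selmer_step:
  assumes n: "n \<ge> 1" and B: "in_B n y" and pos: "y n > 0"
  shows "in_B n (selmer n y)" "selmer_digit n y \<ge> 1" "y 1 > 0"
    "vecy n y = (\<lambda>i. y 1 * bmul n (of_int (selmer_digit n y)) (vecy n (selmer n y)) i)"
proof -
  define k where "k = selmer_digit n y"
  have y1: "y n \<le> y 1" using inB_mono[OF B, of 1 n] n by simp
  have y1le: "y 1 \<le> 1" using B n unfolding in_B_def by auto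
  show y1p: "y 1 > 0" using y1 pos by simp
  have kdef: "k = \<lfloor>1 / y n\<rfloor>" unfolding k_def selmer_digit_def ..
  have k1: "of_int k \<le> 1 / y n" "1 / y n < of_int k + 1" unfolding kdef by linarith+
  have ka: "of_int k * y n \<le> 1" using k1(1) pos by (simp add: field_simps)
  have kb: "1 < (of_int k + 1) * y n" using k1(2) pos by (simp add: field_simps)
  have "1 \<le> 1 / y n" using pos y1 y1le by (simp add: field_simps)
  then show "selmer_digit n y \<ge> 1" using k1 unfolding k_def kdef by linarith
  have last_le: "(1 - of_int k * y n) / y 1 \<le> y n / y 1"
    using kb y1p by (intro divide_right_mono) (auto simp: algebra_simps)
  have last_ge: "0 \<le> (1 - of_int k * y n) / y 1" using ka y1p by simp
  have sn: "selmer n y n = (1 - of_int k * y n) / y 1" unfolding selmer_def k_def by simp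
  have si: "\<And>i. 1 \<le> i \<Longrightarrow> i < n \<Longrightarrow> selmer n y i = y (i+1) / y 1" unfolding selmer_def by simp
  show "in_B n (selmer n y)"
    unfolding in_B_def
  proof (intro conjI allI impI)
    show "selmer n y 1 \<le> 1"
    proof (cases "n = 1")
      case True
      then show ?thesis using sn last_le y1p by simp
    next
      case False
      then have "selmer n y 1 = y 2 / y 1" using si[of 1] n by (simp add: numeral_2_eq_2)
      also have "\<dots> \<le> 1" using inB_mono[OF B, of 1 2] n False y1p by simp
      finally show ?thesis .
    qed
    show "0 \<le> selmer n y n" using sn last_ge by simp
    fix i assume i: "1 \<le> i \<and> i < n"
    show "selmer n y (i+1) \<le> selmer n y i"
    proof (cases "i + 1 = n")
      case True
      then have "selmer n y (i+1) = (1 - of_int k * y n) / y 1" using sn by simp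
      also have "\<dots> \<le> y n / y 1" by (rule last_le)
      also have "\<dots> = selmer n y i" using si[of i] i True by simp
      finally show ?thesis .
    next
      case False
      then have "selmer n y (i+1) = y (i+2) / y 1" using si[of "i+1"] i by simp
      also have "\<dots> \<le> y (i+1) / y 1" using inB_mono[OF B, of "i+1" "i+2"] i False y1p
        by (intro divide_right_mono) auto
      also have "\<dots> = selmer n y i" using si[of i] i by simp
      finally show ?thesis .
    qed
  qed
  show "vecy n y = (\<lambda>i. y 1 * bmul n (of_int (selmer_digit n y)) (vecy n (selmer n y)) i)"
  proof
    fix i
    show "vecy n y i = y 1 * bmul n (of_int (selmer_digit n y)) (vecy n (selmer n y)) i"
    proof (cases "i = 0")
      case True
      have "bmul n (of_int k) (vecy n (selmer n y)) 0 = 1 / y 1"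
      proof (cases "n = 1")
        case True
        then show ?thesis using sn y1p unfolding bmul_def vecy_def by (simp add: field_simps)
      next
        case False
        then show ?thesis using sn si[of "n-1"] n y1p unfolding bmul_def vecy_def
          by (simp add: field_simps)
      qed
      then show ?thesis using True y1p unfolding k_def vecy_def by simp
    next
      case False
      then show ?thesis using si[of "i-1"] y1p unfolding bmul_def vecy_def by (cases "i = 1") auto
    qed
  qed
qed

lemma bmul_scale: "bmul n k (\<lambda>i. c * z i) = (\<lambda>i. c * bmul n k z i)"
  by (auto simp: bmul_def algebra_simps)

lemma foldr_scale: "foldr (\<lambda>j. bmul n (K j)) js (\<lambda>i. c * z i) = (\<lambda>i. c * foldr (\<lambda>j. bmul n (K j)) js z i)"
  by (induction js) (auto simp: bmul_scale)

lemma iter_B: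
  assumes n: "n \<ge> 1" and B: "in_B n x" and pos: "\<forall>j. (selmer n ^^ j) x n > 0"
  shows "in_B n ((selmer n ^^ j) x)"
proof (induction j)
  case 0 then show ?case using B by simp
next
  case (Suc j)
  then show ?case using selmer_step(1)[OF n Suc] pos by auto
qed

lemma chain:
  assumes n: "n \<ge> 1" and B: "in_B n x" and pos: "\<forall>j. (selmer n ^^ j) x n > 0"
  shows "\<exists>c>0. vecy n ((selmer n ^^ a) x) = (\<lambda>i. c * foldr (\<lambda>j. bmul n (of_int (selmer_digit n ((selmer n ^^ (j-1)) x)))) [a+1..<a+q+1] (vecy n ((selmer n ^^ (a+q)) x)) i)"
proof (induction q arbitrary: a)
  case 0
  show ?case by (intro exI[of _ 1]) simp
next
  case (Suc q)
  let ?K = "\<lambda>j. (of_int (selmer_digit n ((selmer n ^^ (j-1)) x)) :: real)"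
  obtain c where c: "c > 0" and
    IH: "vecy n ((selmer n ^^ (a+1)) x) = (\<lambda>i. c * foldr (\<lambda>j. bmul n (?K j)) [a+1+1..<a+1+q+1] (vecy n ((selmer n ^^ (a+1+q)) x)) i)"
    using Suc.IH[of "a+1"] by blast
  let ?y = "(selmer n ^^ a) x"
  have Ba: "in_B n ?y" using iter_B[OF n B pos] .
  have pa: "?y n > 0" using pos by simp
  have st: "vecy n ?y = (\<lambda>i. ?y 1 * bmul n (?K (a+1)) (vecy n ((selmer n ^^ (a+1)) x)) i)"
    using selmer_step(4)[OF n Ba pa] by simp
  have y1: "?y 1 > 0" using selmer_step(3)[OF n Ba pa] .
  have l: "[a+1..<a + Suc q + 1] = (a+1) # [a+1+1..<a+1+q+1]" by (simp add: upt_conv_Cons)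
  have "vecy n ?y = (\<lambda>i. ?y 1 * c * foldr (\<lambda>j. bmul n (?K j)) [a+1..<a + Suc q + 1] (vecy n ((selmer n ^^ (a + Suc q)) x)) i)"
    unfolding st IH l by (simp add: bmul_scale foldr_scale mult.assoc)
  then show ?case using c y1 by (intro exI[of _ "?y 1 * c"]) simp
qed



definition edge :: "nat \<Rightarrow> nat \<Rightarrow> nat \<Rightarrow> bool" where
  "edge n b c \<longleftrightarrow> (b < n \<and> c = b+1) \<or> (b = n \<and> c = 0) \<or> (b = n-1 \<and> c = 0)"

inductive walk :: "nat \<Rightarrow> nat \<Rightarrow> nat \<Rightarrow> nat \<Rightarrow> bool" for n where
  w0: "walk n 0 a a"
| wS: "walk n L a b \<Longrightarrow> edge n b c \<Longrightarrow> walk n (Suc L) a c"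

lemma walk_le: "walk n L a b \<Longrightarrow> a \<le> n \<Longrightarrow> b \<le> n"
  by (induction rule: walk.induct) (auto simp: edge_def)

lemma walk_0: "walk n 0 a b \<Longrightarrow> a = b"
  by (erule walk.cases) auto

lemma walk_Suc: "walk n (Suc L) a c \<Longrightarrow> \<exists>b. walk n L a b \<and> edge n b c"
  by (erule walk.cases) auto

lemma walk_trans: "walk n L2 b c \<Longrightarrow> walk n L1 a b \<Longrightarrow> walk n (L1+L2) a c"
  by (induction rule: walk.induct) (auto intro: walk.intros)

lemma walk_split: "walk n (L1+L2) a c \<Longrightarrow> \<exists>b. walk n L1 a b \<and> walk n L2 b c"
proof (induction L2 arbitrary: c)
  case 0 then show ?case by (auto intro: walk.intros)
next
  case (Suc L2)
  then obtain b' where "walk n (L1+L2) a b'" "edge n b' c" using walk_Suc[OF Suc.prems[simplified]] by blast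
  with Suc.IH obtain b where "walk n L1 a b" "walk n L2 b b'" by blast
  then show ?case using \<open>edge n b' c\<close> by (auto intro: walk.intros)
qed

lemma walk_path: "a + j \<le> n \<Longrightarrow> walk n j a (a + j)"
proof (induction j)
  case 0 then show ?case by (auto intro: walk.intros)
next
  case (Suc j)
  then have "walk n j a (a+j)" by simp
  moreover have "edge n (a+j) (a + Suc j)" using Suc.prems by (simp add: edge_def)
  ultimately show ?case by (auto intro: walk.intros)
qed

lemma cyc1: assumes "n \<ge> 1" shows "walk n n 0 0"
proof -
  have "walk n (n-1) 0 (n-1)" using walk_path[of 0 "n-1" n] by simp
  moreover have "edge n (n-1) 0" by (simp add: edge_def)
  ultimately have "walk n (Suc (n-1)) 0 0" by (rule walk.wS)
  then show ?thesis using assms by simp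
qed

lemma cyc2: "walk n (n+1) 0 0"
proof -
  have "walk n n 0 n" using walk_path[of 0 n n] by simp
  moreover have "edge n n 0" by (simp add: edge_def)
  ultimately show ?thesis by (auto intro: walk.intros)
qed

lemma walk_cycles: assumes "n \<ge> 1" shows "walk n (u*n + v*(n+1)) 0 0"
proof (induction u)
  case 0
  show ?case
  proof (induction v)
    case 0 then show ?case by (auto intro: walk.intros)
  next
    case (Suc v)
    from walk_trans[OF cyc2 Suc] show ?case by (simp add: algebra_simps)
  qed
next
  case (Suc u)
  from walk_trans[OF cyc1[OF assms] Suc] show ?case by (simp add: algebra_simps)
qed

lemma walk_reach: assumes n: "n \<ge> 1" and i: "i \<le> n" and p: "p \<ge> 1"
  shows "walk n (n*n*p) 0 i"
proof -
  define L where "L = n*n*p - i"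
  have "n*n \<le> n*n*p" using p by simp
  moreover have "n \<le> n*n" using n by simp
  ultimately have L1: "L + i = n*n*p" using i unfolding L_def by linarith
  have "n * (n - 1) + n \<le> n*n" using n by (cases n) auto
  hence L2: "n * (n-1) \<le> L" using i L1 \<open>n*n \<le> n*n*p\<close> by linarith
  define q where "q = L div n"
  define r where "r = L mod n"
  have "n * (n-1) div n \<le> q" unfolding q_def using L2 by (rule div_le_mono)
  hence q: "n - 1 \<le> q" using n by simp
  have "r < n" unfolding r_def using n by simp
  hence rq: "r \<le> q" using q by linarith
  have "(q - r)*n + r*(n+1) = q*n + r" using rq by (simp add: algebra_simps diff_mult_distrib)
  also have "\<dots> = L" unfolding q_def r_def by simp
  finally have "walk n L 0 0" using walk_cycles[OF n, of "q-r" r] by simp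
  from walk_trans[OF walk_path[of 0 i n] this] i
  show ?thesis using L1 by (simp add: add.commute)
qed

lemma bmul_edge:
  assumes z: "\<forall>i\<le>n. 0 \<le> z i" and k: "(k::real) \<ge> 1" and b: "b \<le> n" "z b > 0" and e: "edge n b c"
  shows "bmul n k z c > 0"
proof -
  have zn: "0 \<le> z (n-1)" "0 \<le> z n" using z by auto
  from e consider "b < n" "c = b+1" | "b = n" "c = 0" | "b = n - 1" "c = 0" unfolding edge_def by auto
  then show ?thesis
  proof cases
    case 1 then show ?thesis using b by (simp add: bmul_def)
  next
    case 2 then show ?thesis using b k zn by (simp add: bmul_def add_nonneg_pos)
  next
    case 3
    have "k * z (n-1) \<ge> z (n-1)" using k zn by (simp add: mult_le_cancel_right1)
    moreover have "bmul n k z c = k * z (n-1) + z n" using 3 by (simp add: bmul_def)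
    moreover have "z (n-1) > 0" using 3 b by simp
    ultimately show ?thesis using zn by linarith
  qed
qed

lemma bmul_nonneg: "\<forall>i\<le>n. 0 \<le> z i \<Longrightarrow> (k::real) \<ge> 0 \<Longrightarrow> \<forall>i\<le>n. 0 \<le> bmul n k z i"
  by (auto simp: bmul_def)

lemma foldr_nonneg: "\<forall>j\<in>set js. (K j::real) \<ge> 0 \<Longrightarrow> \<forall>i\<le>n. 0 \<le> z i \<Longrightarrow> \<forall>i\<le>n. 0 \<le> foldr (\<lambda>j. bmul n (K j)) js z i"
  by (induction js) (auto intro!: bmul_nonneg[rule_format])

lemma foldr_walk:
  assumes K: "\<forall>j\<in>set js. (K j::real) \<ge> 1" and z: "\<forall>i\<le>n. 0 \<le> z i" and a: "a \<le> n" "z a > 0"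
  shows "walk n (length js) a b \<Longrightarrow> foldr (\<lambda>j. bmul n (K j)) js z b > 0"
  using K
proof (induction js arbitrary: b)
  case Nil then show ?case using walk_0 a by fastforce
next
  case (Cons j js)
  obtain b' where w: "walk n (length js) a b'" and e: "edge n b' b" using walk_Suc Cons.prems(1) by fastforce
  have "foldr (\<lambda>j. bmul n (K j)) js z b' > 0" using Cons w by auto
  moreover have "\<forall>i\<le>n. 0 \<le> foldr (\<lambda>j. bmul n (K j)) js z i"
    using Cons.prems(2) z by (intro foldr_nonneg) auto
  ultimately show ?case using bmul_edge[OF _ _ walk_le[OF w a(1)] _ e] Cons.prems(2) by simp
qed

lemma perron_pos:
  assumes n: "n \<ge> 1" and K: "\<forall>j\<in>set js. (K j::real) \<ge> 1" and p: "length js \<ge> 1"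
    and w: "\<forall>i\<le>n. 0 \<le> w i" and lam: "lam > 0"
    and ev: "\<forall>i\<le>n. foldr (\<lambda>j. bmul n (K j)) js w i = lam * w i" and w0: "w 0 > 0"
  shows "\<forall>i\<le>n. w i > 0"
proof -
  let ?p = "length js"
  have cl: "walk n (s * ?p) a b \<Longrightarrow> a \<le> n \<Longrightarrow> w a > 0 \<Longrightarrow> w b > 0" for s a b
  proof (induction s arbitrary: b)
    case 0 then show ?case using walk_0 by fastforce
  next
    case (Suc s)
    then obtain b' where w1: "walk n (s*?p) a b'" and w2: "walk n ?p b' b"
      using walk_split[of n "s*?p" ?p a b] by (auto simp: add.commute)
    have "w b' > 0" using Suc w1 by auto
    moreover have "b' \<le> n" using walk_le[OF w1 Suc.prems(2)] .
    ultimately have "foldr (\<lambda>j. bmul n (K j)) js w b > 0" using foldr_walk[OF K w _ _ w2] by auto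
    moreover have "b \<le> n" using walk_le[OF w2 \<open>b' \<le> n\<close>] .
    ultimately show ?case using ev lam by (auto simp: zero_less_mult_iff)
  qed
  show ?thesis
  proof (intro allI impI)
    fix i assume "i \<le> n"
    from walk_reach[OF n this p] have "walk n ((n*n) * ?p) 0 i" by simp
    from cl[OF this _ w0] show "w i > 0" by simp
  qed
qed



lemma bmul_lin: "bmul n k (\<lambda>i. a i - t * b i) = (\<lambda>i. bmul n k a i - t * bmul n k b i)"
  by (auto simp: bmul_def algebra_simps)

lemma foldr_lin: "foldr (\<lambda>j. bmul n (K j)) js (\<lambda>i. a i - t * b i) =
   (\<lambda>i. foldr (\<lambda>j. bmul n (K j)) js a i - t * foldr (\<lambda>j. bmul n (K j)) js b i)"
  by (induction js) (auto simp: bmul_lin)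

lemma simple_nonpos:
  assumes n: "n \<ge> 1" and K: "\<forall>j\<in>set js. (K j::real) \<ge> 1" and p: "length js \<ge> 1"
    and v: "\<forall>i\<le>n. 0 < v i" and lam: "lam > 0"
    and evv: "\<forall>i\<le>n. foldr (\<lambda>j. bmul n (K j)) js v i = lam * v i"
    and evz: "\<forall>i\<le>n. foldr (\<lambda>j. bmul n (K j)) js z i = lam * z i" and z0: "z 0 = 0"
  shows "\<forall>i\<le>n. z i \<le> 0"
proof (rule ccontr)
  assume "\<not> (\<forall>i\<le>n. z i \<le> 0)"
  then obtain i1 where i1: "i1 \<le> n" "z i1 > 0" by force
  define S where "S = {i. i \<le> n \<and> 0 < z i}"
  have finS: "finite S" unfolding S_def by simp
  have neS: "S \<noteq> {}" using i1 unfolding S_def by auto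
  define t where "t = Min ((\<lambda>i. v i / z i) ` S)"
  have "t \<in> (\<lambda>i. v i / z i) ` S" unfolding t_def using finS neS by (intro Min_in) auto
  then obtain i2 where i2: "i2 \<in> S" "t = v i2 / z i2" by auto
  have tle: "\<And>i. i \<in> S \<Longrightarrow> t \<le> v i / z i" unfolding t_def using finS by simp
  have tpos: "t > 0" using i2 v unfolding S_def by auto
  define w where "w = (\<lambda>i. v i - t * z i)"
  have wnn: "\<forall>i\<le>n. 0 \<le> w i"
  proof (intro allI impI)
    fix i assume i: "i \<le> n"
    show "0 \<le> w i"
    proof (cases "i \<in> S")
      case True
      then have "z i > 0" unfolding S_def by simp
      with tle[OF True] have "t * z i \<le> v i" by (simp add: field_simps)
      then show ?thesis unfolding w_def by simp
    next
      case False
      then have "z i \<le> 0" using i unfolding S_def by auto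
      then have "t * z i \<le> 0" using tpos by (simp add: mult_nonneg_nonpos)
      moreover have "0 < v i" using v i by simp
      ultimately show ?thesis unfolding w_def by linarith
    qed
  qed
  have evw: "\<forall>i\<le>n. foldr (\<lambda>j. bmul n (K j)) js w i = lam * w i"
    unfolding w_def foldr_lin using evv evz by (auto simp: algebra_simps)
  have w0: "w 0 > 0" unfolding w_def using z0 v by simp
  have "w i2 > 0" using perron_pos[OF n K p wnn lam evw w0] i2(1) unfolding S_def by auto
  moreover have "w i2 = 0" unfolding w_def i2(2) using i2(1) unfolding S_def by auto
  ultimately show False by simp
qed

lemma simple:
  assumes n: "n \<ge> 1" and K: "\<forall>j\<in>set js. (K j::real) \<ge> 1" and p: "length js \<ge> 1"
    and v: "\<forall>i\<le>n. 0 < v i" and v0: "v 0 = 1" and lam: "lam > 0"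
    and evv: "\<forall>i\<le>n. foldr (\<lambda>j. bmul n (K j)) js v i = lam * v i"
    and evu: "\<forall>i\<le>n. foldr (\<lambda>j. bmul n (K j)) js u i = lam * u i"
  shows "\<forall>i\<le>n. u i = u 0 * v i"
proof -
  define z where "z = (\<lambda>i. u i - u 0 * v i)"
  have evz: "\<forall>i\<le>n. foldr (\<lambda>j. bmul n (K j)) js z i = lam * z i"
    unfolding z_def foldr_lin using evv evu by (auto simp: algebra_simps)
  have z0: "z 0 = 0" unfolding z_def v0 by simp
  have evz': "\<forall>i\<le>n. foldr (\<lambda>j. bmul n (K j)) js (\<lambda>i. (-1) * z i) i = lam * ((-1) * z i)"
    unfolding foldr_scale using evz by simp
  have "\<forall>i\<le>n. z i \<le> 0" by (rule simple_nonpos[OF n K p v lam evv evz z0])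
  moreover have "\<forall>i\<le>n. (-1) * z i \<le> 0" by (rule simple_nonpos[OF n K p v lam evv evz']) (simp add: z0)
  ultimately show ?thesis unfolding z_def by force
qed

lemma bmul_norm:
  assumes k: "(k::real) \<ge> 0" and zw: "\<forall>i\<le>n. norm (z i) \<le> w i"
  shows "\<forall>i\<le>n. norm (bmul n (of_real k :: complex) z i) \<le> bmul n k w i"
proof (intro allI impI)
  fix i assume i: "i \<le> n"
  show "norm (bmul n (of_real k :: complex) z i) \<le> bmul n k w i"
  proof (cases "i = 0")
    case True
    have "norm (of_real k * z (n-1) + z n) \<le> norm (of_real k * z (n-1)) + norm (z n)" by (rule norm_triangle_ineq)
    also have "\<dots> = k * norm (z (n-1)) + norm (z n)" using k by (simp add: norm_mult)
    also have "\<dots> \<le> k * w (n-1) + w n" using zw k by (intro add_mono mult_left_mono) auto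
    finally show ?thesis using True by (simp add: bmul_def)
  next
    case False
    then show ?thesis using zw i by (auto simp: bmul_def)
  qed
qed

lemma foldr_norm:
  assumes D: "\<forall>j\<in>set js. D j \<ge> (0::int)" and zw: "\<forall>i\<le>n. norm (z i) \<le> w i"
  shows "\<forall>i\<le>n. norm (foldr (\<lambda>j. bmul n (of_int (D j) :: complex)) js z i) \<le> foldr (\<lambda>j. bmul n (of_int (D j) :: real)) js w i"
  using D
proof (induction js)
  case Nil then show ?case using zw by simp
next
  case (Cons j js)
  have "of_int (D j) = (of_real (of_int (D j)) :: complex)" by simp
  then show ?case using bmul_norm[of "of_int (D j)" n] Cons by simp
qed

lemma foldr_of_real:
  "foldr (\<lambda>j. bmul n (of_int (D j) :: complex)) js (\<lambda>i. of_real (v i)) = (\<lambda>i. of_real (foldr (\<lambda>j. bmul n (of_int (D j) :: real)) js v i))"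
  by (induction js) (auto simp: bmul_def)



lemma mp_mult: "map_poly (of_rat::rat\<Rightarrow>real) (p*q) = map_poly of_rat p * map_poly of_rat q"
proof -
  interpret h: map_poly_comm_ring_hom "of_rat :: rat \<Rightarrow> real" ..
  show ?thesis by (rule h.hom_mult)
qed

lemma ev_mult: "poly (map_poly (of_rat::rat\<Rightarrow>real) (p*q)) x = poly (map_poly of_rat p) x * poly (map_poly of_rat q) x"
  by (simp add: mp_mult)

lemma ev_add: "poly (map_poly (of_rat::rat\<Rightarrow>real) (p+q)) x = poly (map_poly of_rat p) x + poly (map_poly of_rat q) x"
  by (simp add: of_rat_hom.map_poly_hom_add)

definition Fl :: "real \<Rightarrow> real set" where
  "Fl lam = {r. \<exists>P Q :: rat poly. poly (map_poly of_rat Q) lam \<noteq> 0 \<and> r = poly (map_poly of_rat P) lam / poly (map_poly of_rat Q) lam}"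

lemma Fl_poly: "poly (map_poly of_rat P) lam \<in> Fl lam"
  unfolding Fl_def by (intro CollectI exI[of _ P] exI[of _ 1]) simp

lemma Fl_int: "of_int k \<in> Fl lam"
  using Fl_poly[of "monom (of_int k) 0" lam] by (simp add: of_rat_hom.map_poly_hom_monom poly_monom)

lemma Fl_lam: "lam \<in> Fl lam"
  using Fl_poly[of "monom 1 1" lam] by (simp add: of_rat_hom.map_poly_hom_monom poly_monom)

lemma Fl_add: assumes "a \<in> Fl lam" "b \<in> Fl lam" shows "a + b \<in> Fl lam"
proof -
  from assms obtain P1 Q1 P2 Q2 :: "rat poly" where
    1: "poly (map_poly of_rat Q1) lam \<noteq> 0" "a = poly (map_poly of_rat P1) lam / poly (map_poly of_rat Q1) lam" and
    2: "poly (map_poly of_rat Q2) lam \<noteq> 0" "b = poly (map_poly of_rat P2) lam / poly (map_poly of_rat Q2) lam"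
    unfolding Fl_def by blast
  show ?thesis unfolding Fl_def
    by (intro CollectI exI[of _ "P1*Q2+P2*Q1"] exI[of _ "Q1*Q2"]) (use 1 2 in \<open>simp add: ev_mult ev_add add_divide_distrib\<close>)
qed

lemma Fl_mult: assumes "a \<in> Fl lam" "b \<in> Fl lam" shows "a * b \<in> Fl lam"
proof -
  from assms obtain P1 Q1 P2 Q2 :: "rat poly" where
    1: "poly (map_poly of_rat Q1) lam \<noteq> 0" "a = poly (map_poly of_rat P1) lam / poly (map_poly of_rat Q1) lam" and
    2: "poly (map_poly of_rat Q2) lam \<noteq> 0" "b = poly (map_poly of_rat P2) lam / poly (map_poly of_rat Q2) lam"
    unfolding Fl_def by blast
  show ?thesis unfolding Fl_def
    by (intro CollectI exI[of _ "P1*P2"] exI[of _ "Q1*Q2"]) (use 1 2 in \<open>simp add: ev_mult\<close>)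
qed

lemma Fl_div: assumes "a \<in> Fl lam" "b \<in> Fl lam" "b \<noteq> 0" shows "a / b \<in> Fl lam"
proof -
  from assms obtain P1 Q1 P2 Q2 :: "rat poly" where
    1: "poly (map_poly of_rat Q1) lam \<noteq> 0" "a = poly (map_poly of_rat P1) lam / poly (map_poly of_rat Q1) lam" and
    2: "poly (map_poly of_rat Q2) lam \<noteq> 0" "b = poly (map_poly of_rat P2) lam / poly (map_poly of_rat Q2) lam"
    unfolding Fl_def by blast
  have "poly (map_poly of_rat P2) lam \<noteq> 0" using 2 assms(3) by auto
  then show ?thesis unfolding Fl_def
    by (intro CollectI exI[of _ "P1*Q2"] exI[of _ "Q1*P2"]) (use 1 2 in \<open>simp add: ev_mult\<close>)
qed

lemma Fl_diff: assumes "a \<in> Fl lam" "b \<in> Fl lam" shows "a - b \<in> Fl lam"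
proof -
  have "(-1) * b \<in> Fl lam" using Fl_mult[OF Fl_int[of "-1"] assms(2)] by simp
  from Fl_add[OF assms(1) this] show ?thesis by simp
qed



lemma Fl_zero: "0 \<in> Fl lam" using Fl_int[of 0 lam] by simp

lemma Fl_sum: fixes N :: nat shows "(\<And>j. j < N \<Longrightarrow> f j \<in> Fl lam) \<Longrightarrow> (\<Sum>j<N. f j) \<in> Fl lam"
  by (induction N) (auto simp: Fl_zero intro!: Fl_add)

lemma solve_Fl:
  fixes N :: nat and eqs :: "((nat \<Rightarrow> real) \<times> real) list" and u :: "nat \<Rightarrow> real"
  shows "\<forall>e\<in>set eqs. (\<forall>j<N. fst e j \<in> Fl lam) \<and> snd e \<in> Fl lam \<Longrightarrow>
   \<forall>e\<in>set eqs. (\<Sum>j<N. fst e j * u j) = snd e \<Longrightarrow>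
   \<exists>u'. (\<forall>j<N. u' j \<in> Fl lam) \<and> (\<forall>e\<in>set eqs. (\<Sum>j<N. fst e j * u' j) = snd e)"
proof (induction N arbitrary: eqs u)
  case 0
  then show ?case by (intro exI[of _ "\<lambda>_. 0"]) auto
next
  case (Suc N)
  show ?case
  proof (cases "\<exists>e\<in>set eqs. fst e N \<noteq> 0")
    case True
    then obtain a0 b0 where e0: "(a0, b0) \<in> set eqs" "a0 N \<noteq> 0" by auto
    define tr where "tr = (\<lambda>(a::nat\<Rightarrow>real, b::real). ((\<lambda>j. a j - (a N / a0 N) * a0 j), b - (a N / a0 N) * b0))"
    define eqs' where "eqs' = map tr eqs"
    have a0F: "\<forall>j<Suc N. a0 j \<in> Fl lam" "b0 \<in> Fl lam" using Suc.prems(1) e0(1) by auto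
    have F': "\<forall>e\<in>set eqs'. (\<forall>j<N. fst e j \<in> Fl lam) \<and> snd e \<in> Fl lam"
    proof
      fix e assume "e \<in> set eqs'"
      then obtain a b where ab: "(a, b) \<in> set eqs" "e = tr (a, b)" unfolding eqs'_def by auto
      have aF: "\<forall>j<Suc N. a j \<in> Fl lam" "b \<in> Fl lam" using Suc.prems(1) ab(1) by auto
      have c: "a N / a0 N \<in> Fl lam" using aF a0F e0(2) by (intro Fl_div) auto
      have m1: "\<forall>j<N. a j - (a N / a0 N) * a0 j \<in> Fl lam"
      proof (intro allI impI)
        fix j assume "j < N"
        then have "a j \<in> Fl lam" "a0 j \<in> Fl lam" using aF a0F by auto
        then show "a j - (a N / a0 N) * a0 j \<in> Fl lam" using Fl_diff Fl_mult c by blast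
      qed
      have m2: "b - (a N / a0 N) * b0 \<in> Fl lam" using Fl_diff[OF aF(2) Fl_mult[OF c a0F(2)]] .
        show "(\<forall>j<N. fst e j \<in> Fl lam) \<and> snd e \<in> Fl lam" using ab(2) m1 m2 by (simp add: tr_def)
    qed
    have S': "\<forall>e\<in>set eqs'. (\<Sum>j<N. fst e j * u j) = snd e"
    proof
      fix e assume "e \<in> set eqs'"
      then obtain a b where ab: "(a, b) \<in> set eqs" "e = tr (a, b)" unfolding eqs'_def by auto
      have ea: "(\<Sum>j<N. a j * u j) + a N * u N = b" using Suc.prems(2) ab(1) by auto
      have eb: "(\<Sum>j<N. a0 j * u j) + a0 N * u N = b0" using Suc.prems(2) e0(1) by auto
      have "(\<Sum>j<N. (a j - (a N / a0 N) * a0 j) * u j) = (\<Sum>j<N. a j * u j) - (a N / a0 N) * (\<Sum>j<N. a0 j * u j)"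
        by (simp add: algebra_simps sum_subtractf sum_distrib_left)
      also have "\<dots> = b - (a N / a0 N) * b0"
        using e0(2) unfolding ea[symmetric] eb[symmetric] by (simp add: field_simps)
      finally show "(\<Sum>j<N. fst e j * u j) = snd e" using ab(2) by (simp add: tr_def)
    qed
    obtain u' where u'F: "\<forall>j<N. u' j \<in> Fl lam" and u'S: "\<forall>e\<in>set eqs'. (\<Sum>j<N. fst e j * u' j) = snd e"
      using Suc.IH[OF F' S'] by blast
    define xN where "xN = (b0 - (\<Sum>j<N. a0 j * u' j)) / a0 N"
    define u'' where "u'' = u'(N := xN)"
    have sumeq: "\<And>a. (\<Sum>j<N. a j * u'' j) = (\<Sum>j<N. a j * u' j)"
      unfolding u''_def by (intro sum.cong) auto
    have xNF: "xN \<in> Fl lam"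
    proof -
      have "(\<Sum>j<N. a0 j * u' j) \<in> Fl lam"
        using a0F u'F by (intro Fl_sum Fl_mult) auto
      then show ?thesis unfolding xN_def using a0F e0(2) by (intro Fl_div Fl_diff) auto
    qed
    show ?thesis
    proof (intro exI[of _ u''] conjI ballI allI impI)
      fix j assume "j < Suc N"
      then show "u'' j \<in> Fl lam" using u'F xNF unfolding u''_def by auto
    next
      fix e assume e: "e \<in> set eqs"
      obtain a b where ab: "e = (a, b)" by (cases e)
      have "tr (a, b) \<in> set eqs'" using e ab unfolding eqs'_def by auto
      then have "(\<Sum>j<N. (a j - (a N / a0 N) * a0 j) * u' j) = b - (a N / a0 N) * b0"
        using u'S by (auto simp: tr_def)
      then have "(\<Sum>j<N. a j * u' j) - (a N / a0 N) * (\<Sum>j<N. a0 j * u' j) = b - (a N / a0 N) * b0"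
        by (simp add: algebra_simps sum_subtractf sum_distrib_left)
      then have "(\<Sum>j<N. a j * u' j) + a N * xN = b"
        unfolding xN_def using e0(2) by (simp add: field_simps)
      then show "(\<Sum>j<Suc N. fst e j * u'' j) = snd e"
        using ab sumeq[of a] by (simp add: u''_def)
    qed
  next
    case False
    have S': "\<forall>e\<in>set eqs. (\<Sum>j<N. fst e j * u j) = snd e" using Suc.prems(2) False by auto
    have F': "\<forall>e\<in>set eqs. (\<forall>j<N. fst e j \<in> Fl lam) \<and> snd e \<in> Fl lam" using Suc.prems(1) by auto
    obtain u' where u'F: "\<forall>j<N. u' j \<in> Fl lam" and u'S: "\<forall>e\<in>set eqs. (\<Sum>j<N. fst e j * u' j) = snd e"
      using Suc.IH[OF F' S'] by blast
    define u'' where "u'' = u'(N := 0)"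
    have sumeq: "\<And>a. (\<Sum>j<N. a j * u'' j) = (\<Sum>j<N. a j * u' j)"
      unfolding u''_def by (intro sum.cong) auto
    show ?thesis
      using u'F u'S False sumeq Fl_zero by (intro exI[of _ u'']) (auto simp: u''_def)
  qed
qed



lemma foldr_Fl: "\<forall>i\<le>n. z i \<in> Fl lam \<Longrightarrow> \<forall>i\<le>n. foldr (\<lambda>j. bmul n (of_int (D j))) js z i \<in> Fl lam"
  by (induction js) (auto simp: bmul_def intro!: Fl_add Fl_mult Fl_int Fl_zero)

lemma spec_rad:
  assumes n: "n \<ge> 1" and D: "\<forall>j\<in>set js. D j \<ge> (1::int)"
    and v: "\<forall>i\<le>n. 0 < v i" and lam: "lam > 0"
    and ev: "\<forall>i\<le>n. foldr (\<lambda>j. bmul n (of_int (D j) :: real)) js v i = lam * v i"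
  shows "spectral_radius (map_mat (of_int :: int \<Rightarrow> complex) (foldr (\<lambda>j M. beta_mat n (D j) * M) js (1\<^sub>m (n+1)))) = lam"
proof -
  define CM where "CM = map_mat (of_int :: int \<Rightarrow> complex) (foldr (\<lambda>j M. beta_mat n (D j) * M) js (1\<^sub>m (n+1)))"
  have CMc: "CM \<in> carrier_mat (n+1) (n+1)" unfolding CM_def using foldr_carrier[of n D js] by simp
  have mv: "\<And>z. CM *\<^sub>v vec (n+1) z = vec (n+1) (foldr (\<lambda>j. bmul n (of_int (D j))) js z)"
    unfolding CM_def by (rule prod_vec[OF n])
  define w where "w = vec (n+1) (\<lambda>i. complex_of_real (v i))"
  have "eigenvector CM w (of_real lam)"
    unfolding eigenvector_def
  proof (intro conjI)
    show "w \<in> carrier_vec (dim_row CM)" using CMc unfolding w_def by simp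
    have "w $ 0 \<noteq> 0" unfolding w_def using v by auto
    then show "w \<noteq> 0\<^sub>v (dim_row CM)" using CMc by auto
    show "CM *\<^sub>v w = of_real lam \<cdot>\<^sub>v w"
      unfolding w_def mv foldr_of_real by (rule eq_vecI) (use ev in auto)
  qed
  then have lamS: "of_real lam \<in> spectrum CM" unfolding spectrum_def eigenvalue_def by auto
  have bound: "norm mu \<le> lam" if "mu \<in> spectrum CM" for mu
  proof -
    from that obtain u where "eigenvector CM u mu" unfolding spectrum_def eigenvalue_def by auto
    then have uc: "u \<in> carrier_vec (n+1)" and u0: "u \<noteq> 0\<^sub>v (n+1)" and eu: "CM *\<^sub>v u = mu \<cdot>\<^sub>v u"
      unfolding eigenvector_def using CMc by auto
    define uf where "uf = (\<lambda>i. u $ i)"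
    have uvec: "vec (n+1) uf = u" unfolding uf_def using uc by (intro eq_vecI) auto
    have evu: "\<forall>i\<le>n. foldr (\<lambda>j. bmul n (of_int (D j))) js uf i = mu * uf i"
    proof (intro allI impI)
      fix i assume i: "i \<le> n"
      have "vec (n+1) (foldr (\<lambda>j. bmul n (of_int (D j))) js uf) $ i = (mu \<cdot>\<^sub>v vec (n+1) uf) $ i"
        using eu unfolding mv[symmetric] uvec by simp
      then show "foldr (\<lambda>j. bmul n (of_int (D j))) js uf i = mu * uf i" using i by simp
    qed
    obtain i1 where i1: "i1 \<le> n" "uf i1 \<noteq> 0"
    proof (rule ccontr)
      assume "\<not> thesis"
      then have "\<forall>i\<le>n. uf i = 0" using that by blast
      then have "u = 0\<^sub>v (n+1)" using uvec by (intro eq_vecI) (auto simp: uf_def[symmetric] uc)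
      then show False using u0 by simp
    qed
    define r where "r = Max ((\<lambda>i. norm (uf i) / v i) ` {..n})"
    have rge: "\<And>i. i \<le> n \<Longrightarrow> norm (uf i) / v i \<le> r" unfolding r_def by simp
    have "r \<in> (\<lambda>i. norm (uf i) / v i) ` {..n}" unfolding r_def by (intro Max_in) auto
    then obtain i0 where i0: "i0 \<le> n" "r = norm (uf i0) / v i0" by auto
    have "0 < norm (uf i1) / v i1" using i1 v by simp
    then have rpos: "r > 0" using rge[OF i1(1)] by linarith
    have le: "\<forall>i\<le>n. norm (uf i) \<le> r * v i"
    proof (intro allI impI)
      fix i assume i: "i \<le> n"
      from rge[OF i] v i show "norm (uf i) \<le> r * v i" by (simp add: divide_le_eq)
    qed
    have D0: "\<forall>j\<in>set js. D j \<ge> 0" using D by auto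
    have "norm (foldr (\<lambda>j. bmul n (of_int (D j))) js uf i0) \<le> foldr (\<lambda>j. bmul n (of_int (D j))) js (\<lambda>i. r * v i) i0"
      using foldr_norm[OF D0 le] i0 by auto
    also have "\<dots> = r * (lam * v i0)" unfolding foldr_scale using ev i0 by simp
    finally have "norm (mu * uf i0) \<le> r * (lam * v i0)" using evu i0 by simp
    moreover have nuf: "norm (uf i0) = r * v i0"
    proof -
      have "v i0 > 0" using i0 v by simp
      then show ?thesis using i0(2) by simp
    qed
    ultimately have "norm mu * (r * v i0) \<le> lam * (r * v i0)"
      by (simp add: norm_mult algebra_simps)
    moreover have "r * v i0 > 0" using rpos v i0(1) by simp
    ultimately show "norm mu \<le> lam" using mult_le_cancel_right_pos by blast
  qed
  have sr: "spectral_radius CM \<in> norm ` spectrum CM" using spectral_radius_mem_max(1)[OF CMc] by simp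
  have "lam \<le> spectral_radius CM" using spectral_radius_mem_max(2)[OF CMc, of lam] lamS lam by force
  moreover have "spectral_radius CM \<le> lam" using sr bound by auto
  ultimately show ?thesis unfolding CM_def by simp
qed



theorem mainTheorem6:
  fixes n m p :: nat and x :: "nat \<Rightarrow> real" and \<rho>\<^sub>0 :: real
  assumes "n \<ge> 1"
    and "in_B n x"
    and "\<forall>j. (selmer n ^^ j) x n > 0"
    and "p \<ge> 1"
    and "\<forall>i\<in>{1..n}. (selmer n ^^ (m + p)) x i = (selmer n ^^ m) x i"
    and "\<rho>\<^sub>0 = spectral_radius (map_mat of_int (period_mat n x m p))"
  shows "(\<forall>i\<in>{1..n}. \<exists>P Q :: rat poly. poly (map_poly of_rat Q) \<rho>\<^sub>0 \<noteq> 0 \<and>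
            x i = poly (map_poly of_rat P) \<rho>\<^sub>0 / poly (map_poly of_rat Q) \<rho>\<^sub>0)
       \<and> (\<exists>q :: rat poly. q \<noteq> 0 \<and> degree q \<le> n + 1 \<and> poly (map_poly of_rat q) \<rho>\<^sub>0 = 0)"
proof -
  note n = assms(1) and B = assms(2) and pos = assms(3) and p = assms(4) and per = assms(5)
  define js where "js = [m+1..<m+p+1]"
  define D where "D = (\<lambda>j. selmer_digit n ((selmer n ^^ (j - 1)) x))"
  define PM where "PM = period_mat n x m p"
  have PMdef: "PM = foldr (\<lambda>j M. beta_mat n (D j) * M) js (1\<^sub>m (n+1))"
    unfolding PM_def period_mat_def js_def D_def ..
  have PMc: "PM \<in> carrier_mat (n+1) (n+1)" unfolding PMdef by (rule foldr_carrier)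
  define F where "F = (\<lambda>z::nat\<Rightarrow>real. foldr (\<lambda>j. bmul n (of_int (D j))) js z)"
  define v where "v = vecy n ((selmer n ^^ m) x)"
  have Dge: "\<forall>j\<in>set js. D j \<ge> 1"
  proof
    fix j assume "j \<in> set js"
    have "in_B n ((selmer n ^^ (j-1)) x)" by (rule iter_B[OF n B pos])
    from selmer_step(2)[OF n this] pos show "D j \<ge> 1" unfolding D_def by auto
  qed
  have K: "\<forall>j\<in>set js. (of_int (D j) :: real) \<ge> 1" using Dge by auto
  have lenjs: "length js \<ge> 1" unfolding js_def using p by simp
  obtain c where c: "c > 0" and ch: "vecy n ((selmer n ^^ m) x) = (\<lambda>i. c * foldr (\<lambda>j. bmul n (of_int (selmer_digit n ((selmer n ^^ (j-1)) x)))) [m+1..<m+p+1] (vecy n ((selmer n ^^ (m+p)) x)) i)"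
    using chain[OF n B pos, of m p] by blast
  have vp: "vecy n ((selmer n ^^ (m+p)) x) = v"
    unfolding v_def vecy_def using per by (auto simp: fun_eq_iff)
  define lam where "lam = 1 / c"
  have lam: "lam > 0" unfolding lam_def using c by simp
  have ev: "\<forall>i\<le>n. F v i = lam * v i"
  proof (intro allI impI)
    fix i
    have "v i = c * F v i" using ch unfolding vp v_def[symmetric] F_def D_def js_def by (simp add: fun_eq_iff)
    then show "F v i = lam * v i" unfolding lam_def using c by (simp add: field_simps)
  qed
  have Bm: "in_B n ((selmer n ^^ m) x)" by (rule iter_B[OF n B pos])
  have vpos: "\<forall>i\<le>n. 0 < v i"
  proof (intro allI impI)
    fix i assume i: "i \<le> n"
    show "0 < v i"
    proof (cases "i = 0")
      case True then show ?thesis unfolding v_def vecy_def by simp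
    next
      case False
      have "(selmer n ^^ m) x n \<le> (selmer n ^^ m) x i" using inB_mono[OF Bm, of i n] False i by simp
      then show ?thesis using pos[rule_format, of m] False i unfolding v_def vecy_def by simp
    qed
  qed
  have v0: "v 0 = 1" unfolding v_def vecy_def by simp
  have rho: "\<rho>\<^sub>0 = lam"
    unfolding assms(6) PM_def[symmetric] PMdef
    by (rule spec_rad[OF n Dge vpos lam]) (use ev in \<open>simp add: F_def\<close>)
  define RM where "RM = map_mat (of_int :: int \<Rightarrow> real) PM"
  have RMc: "RM \<in> carrier_mat (n+1) (n+1)" unfolding RM_def using PMc by simp
  have RMsum: "\<And>u i. i \<le> n \<Longrightarrow> (\<Sum>j<n+1. RM $$ (i,j) * u j) = F u i"
  proof -
    fix u :: "nat \<Rightarrow> real" and i assume i: "i \<le> n"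
    have "(RM *\<^sub>v vec (n+1) u) $ i = vec (n+1) (F u) $ i"
      unfolding RM_def PMdef F_def prod_vec[OF n] ..
    moreover have "(RM *\<^sub>v vec (n+1) u) $ i = (\<Sum>j<n+1. RM $$ (i,j) * u j)"
      using i RMc by (simp add: scalar_prod_def lessThan_atLeast0)
    ultimately show "(\<Sum>j<n+1. RM $$ (i,j) * u j) = F u i" using i by simp
  qed
  define eqs where "eqs = map (\<lambda>i. ((\<lambda>j. RM $$ (i,j) - (if j = i then lam else 0)), 0::real)) [0..<n+1]
      @ [((\<lambda>j. if j = 0 then 1 else 0), 1)]"
  have sat_iff: "(\<forall>e\<in>set eqs. (\<Sum>j<n+1. fst e j * u j) = snd e) \<longleftrightarrow> (\<forall>i\<le>n. F u i = lam * u i) \<and> u 0 = 1" for u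
  proof -
    have "(\<Sum>j<n+1. (RM $$ (i,j) - (if j = i then lam else 0)) * u j) = F u i - lam * u i" if "i \<le> n" for i
    proof -
      have "(\<Sum>j<n+1. (RM $$ (i,j) - (if j = i then lam else 0)) * u j) = (\<Sum>j<n+1. RM $$ (i,j) * u j) - (\<Sum>j<n+1. (if j = i then lam * u j else 0))"
        by (subst sum_subtractf[symmetric]) (rule sum.cong, auto simp: algebra_simps)
      also have "\<dots> = F u i - lam * u i" using RMsum[OF that] that by simp
      finally show ?thesis .
    qed
    moreover have "(\<Sum>j<n+1. (if j = 0 then 1 else 0) * u j) = u 0"
    proof -
      have "(\<Sum>j<n+1. (if j = 0 then 1 else 0) * u j) = (\<Sum>j<n+1. (if j = 0 then u j else 0))"
        by (rule sum.cong) auto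
      then show ?thesis by simp
    qed
    ultimately show ?thesis unfolding eqs_def
      by (auto simp: atLeast0LessThan less_Suc_eq_le simp del: sum.lessThan_Suc upt_Suc)
  qed
  have eqsF: "\<forall>e\<in>set eqs. (\<forall>j<n+1. fst e j \<in> Fl lam) \<and> snd e \<in> Fl lam"
  proof -
    have "RM $$ (i,j) \<in> Fl lam" if "i < n+1" "j < n+1" for i j
      unfolding RM_def using PMc that by (simp add: Fl_int)
    then show ?thesis unfolding eqs_def
      by (auto intro!: Fl_diff Fl_lam Fl_zero Fl_int[of 1, simplified] simp: Fl_zero)
  qed
  obtain u' where u'F: "\<forall>j<n+1. u' j \<in> Fl lam" and u'S: "\<forall>e\<in>set eqs. (\<Sum>j<n+1. fst e j * u' j) = snd e"
    using solve_Fl[OF eqsF, of v] sat_iff[of v] ev v0 by blast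
  have u'ev: "\<forall>i\<le>n. F u' i = lam * u' i" and u'0: "u' 0 = 1" using u'S sat_iff by auto
  have "\<forall>i\<le>n. u' i = u' 0 * v i"
    by (rule simple[OF n K lenjs vpos v0 lam]) (use ev u'ev in \<open>simp_all add: F_def\<close>)
  then have vF: "\<forall>i\<le>n. v i \<in> Fl lam" using u'F u'0 by (metis less_Suc_eq_le add.commute plus_1_eq_Suc mult_1)
  obtain c0 where c0: "c0 > 0" and ch0: "vecy n ((selmer n ^^ 0) x) = (\<lambda>i. c0 * foldr (\<lambda>j. bmul n (of_int (selmer_digit n ((selmer n ^^ (j-1)) x)))) [0+1..<0+m+1] (vecy n ((selmer n ^^ (0+m)) x)) i)"
    using chain[OF n B pos, of 0 m] by blast
  define G where "G = foldr (\<lambda>j. bmul n (of_int (selmer_digit n ((selmer n ^^ (j-1)) x)) :: real)) [1..<m+1] v"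
  have GF: "\<forall>i\<le>n. G i \<in> Fl lam" unfolding G_def by (rule foldr_Fl[OF vF])
  have xG: "vecy n x i = c0 * G i" for i using ch0 unfolding G_def v_def by (simp add: fun_eq_iff)
  have G0: "c0 * G 0 = 1" using xG[of 0] unfolding vecy_def by simp
  then have G0nz: "G 0 \<noteq> 0" by auto
  have xF: "x i \<in> Fl lam" if i: "i \<in> {1..n}" for i
  proof -
    have "x i = c0 * G i" using xG[of i] i unfolding vecy_def by simp
    also have "\<dots> = G i / G 0" using G0 G0nz by (simp add: field_simps)
    finally show ?thesis using GF i G0nz Fl_div by auto
  qed
  have part1: "\<forall>i\<in>{1..n}. \<exists>P Q :: rat poly. poly (map_poly of_rat Q) \<rho>\<^sub>0 \<noteq> 0 \<and>
            x i = poly (map_poly of_rat P) \<rho>\<^sub>0 / poly (map_poly of_rat Q) \<rho>\<^sub>0"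
    using xF unfolding rho Fl_def by blast
  define q where "q = char_poly (map_mat (of_int :: int \<Rightarrow> rat) PM)"
  have QMc: "map_mat (of_int :: int \<Rightarrow> rat) PM \<in> carrier_mat (n+1) (n+1)" using PMc by simp
  have dq: "degree q = n+1" "coeff q (n+1) = 1" using degree_monic_char_poly[OF QMc] unfolding q_def by auto
  have qnz: "q \<noteq> 0" using dq(2) by auto
  have "map_poly of_rat q = char_poly (map_mat of_rat (map_mat (of_int :: int \<Rightarrow> rat) PM))"
    unfolding q_def by (rule of_rat_hom.char_poly_hom[OF QMc, symmetric])
  also have "map_mat of_rat (map_mat (of_int :: int \<Rightarrow> rat) PM) = RM"
    unfolding RM_def by (rule eq_matI) (auto simp: of_rat_of_int_eq)
  finally have mq: "map_poly of_rat q = char_poly RM" .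
  have "eigenvector RM (vec (n+1) v) lam"
    unfolding eigenvector_def
  proof (intro conjI)
    show "vec (n+1) v \<in> carrier_vec (dim_row RM)" using RMc by simp
    show "vec (n + 1) v \<noteq> 0\<^sub>v (dim_row RM)"
    proof
      assume "vec (n + 1) v = 0\<^sub>v (dim_row RM)"
      then have "vec (n + 1) v $ 0 = 0\<^sub>v (dim_row RM) $ 0" by simp
      then show False using v0 RMc by simp
    qed
    show "RM *\<^sub>v vec (n + 1) v = lam \<cdot>\<^sub>v vec (n + 1) v"
      unfolding RM_def PMdef prod_vec[OF n] by (rule eq_vecI) (use ev in \<open>auto simp: F_def\<close>)
  qed
  then have "poly (char_poly RM) lam = 0"
    using eigenvalue_root_char_poly[OF RMc] unfolding eigenvalue_def by blast
  then have part2: "\<exists>q :: rat poly. q \<noteq> 0 \<and> degree q \<le> n + 1 \<and> poly (map_poly of_rat q) \<rho>\<^sub>0 = 0"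
    using qnz dq mq rho by (intro exI[of _ q]) auto
  from part1 part2 show ?thesis by blast
qed

end
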